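(* For every language L_1 ∈ GRLOWJ there exists a language L_2 ∈ GLLOWJ such that L_1^R = L_2, and vice versa (for every L_2 ∈ GLLOWJ there exists L_1 ∈ GRLOWJ with L_2^R = L_1).
   Context: For a word w = a_1⋯a_n, w^R = a_n⋯a_1, and L^R = {w^R : w ∈ L}. A generalized right linear one-way jumping finite automaton (GRLOWJFA) is a tuple A = (Σ, Q, q_0, F, R) with alphabet Σ, finite state set Q, start state q_0, final states F ⊆ Q, and a finite set of rules R ⊂ Q × Σ^+ × Q such that for each p ∈ Q and w ∈ Σ^+ there is at most one q with (p,w,q) ∈ R (rule (p,w,q): from p, delete w, go to q). For p ∈ Q let Σ_p = {w ∈ Σ^+ : (p,w,q) ∈ R for some q}. Configurations are strings in Σ^* Q Σ^*, with moves: (1) for t,u,v ∈ Σ^* and (p,x,q) ∈ R, tpuxv ⇒ tuqv, provided u contains no word of Σ_p as a subword and there is no nonempty suffix u_2 of u and nonempty prefix x_1 of x with u_2x_1 = x; (2) for x ∈ Σ^+ and y ∈ Σ^* such that y contains no word of Σ_p as a subword, xpy ⇒ pxy. Accepted language: {w ∈ Σ^* : q_0 w ⇒^* q_f for some q_f ∈ F}. A generalized left linear one-way jumping finite automaton (GLLOWJFA) is a tuple A = (Σ, Q, q_0, F, R) with R ⊂ Q × Σ^+ × Q finite; a rule (q,w,p) means from p, delete w, go to q, and for each p and w there is at most one such q. For p ∈ Q let Σ_p = {w ∈ Σ^+ : (q,w,p) ∈ R for some q}. Configurations are strings in Σ^* Q Σ^*, with moves: (1) for t,u,v ∈ Σ^*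 and (q,x,p) ∈ R, vxupt moves to vqut, provided u contains no word of Σ_p as a subword and there is no nonempty prefix u_1 of u and nonempty suffix x_2 of x with x_2u_1 = x; (2) for x ∈ Σ^+ and y ∈ Σ^* such that y contains no word of Σ_p as a subword, ypx moves to yxp. Accepted language: {w ∈ Σ^* : w q_0 leads in zero or more moves to q_f for some q_f ∈ F}. GRLOWJ and GLLOWJ denote the classes of languages accepted by GRLOWJFA and GLLOWJFA respectively. *)

theory Defs
  imports Main "HOL-Library.Sublist"
begin

text \<open>Words are lists; configurations w1 q w2 are triples (w1, q, w2).
  "Subword" is read as contiguous factor (Sublist.sublist).\<close>

definition contains_none :: "'a list \<Rightarrow> 'a list set \<Rightarrow> bool" where
  "contains_none u S \<longleftrightarrow> (\<forall>w\<in>S. \<not> sublist w u)"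

definition GRLOWJFA :: "'a set \<Rightarrow> 'q set \<Rightarrow> 'q \<Rightarrow> 'q set \<Rightarrow> ('q \<times> 'a list \<times> 'q) set \<Rightarrow> bool" where
  "GRLOWJFA Sig Q q0 F R \<longleftrightarrow> finite Sig \<and> finite Q \<and> q0 \<in> Q \<and> F \<subseteq> Q \<and> finite R \<and>
     (\<forall>(p, w, q) \<in> R. p \<in> Q \<and> q \<in> Q \<and> w \<noteq> [] \<and> set w \<subseteq> Sig) \<and>
     (\<forall>p w q q'. (p, w, q) \<in> R \<and> (p, w, q') \<in> R \<longrightarrow> q = q')"

definition SigR :: "('q \<times> 'a list \<times> 'q) set \<Rightarrow> 'q \<Rightarrow> 'a list set" where
  "SigR R p = {w. w \<noteq> [] \<and> (\<exists>q. (p, w, q) \<in> R)}"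

definition rstep :: "('q \<times> 'a list \<times> 'q) set \<Rightarrow> ('a list \<times> 'q \<times> 'a list) \<Rightarrow> ('a list \<times> 'q \<times> 'a list) \<Rightarrow> bool" where
  "rstep R c c' \<longleftrightarrow>
     (\<exists>t u x v p q. (p, x, q) \<in> R \<and> c = (t, p, u @ x @ v) \<and> c' = (t @ u, q, v) \<and>
        contains_none u (SigR R p) \<and>
        \<not> (\<exists>u1 u2 x1 x2. u = u1 @ u2 \<and> x = x1 @ x2 \<and> u2 \<noteq> [] \<and> x1 \<noteq> [] \<and> u2 @ x1 = x))
   \<or> (\<exists>x y p. x \<noteq> [] \<and> contains_none y (SigR R p) \<and> c = (x, p, y) \<and> c' = ([], p, x @ y))"

definition rlang :: "'a set \<Rightarrow> 'q \<Rightarrow> 'q set \<Rightarrow> ('q \<times> 'a list \<times> 'q) set \<Rightarrow> 'a list set" where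
  "rlang Sig q0 F R = {w. w \<in> lists Sig \<and> (\<exists>qf\<in>F. (rstep R)\<^sup>*\<^sup>* ([], q0, w) ([], qf, []))}"

definition GRLOWJ :: "'a list set set" where
  "GRLOWJ = {L. \<exists>Sig (Q :: nat set) q0 F R. GRLOWJFA Sig Q q0 F R \<and> L = rlang Sig q0 F R}"

definition GLLOWJFA :: "'a set \<Rightarrow> 'q set \<Rightarrow> 'q \<Rightarrow> 'q set \<Rightarrow> ('q \<times> 'a list \<times> 'q) set \<Rightarrow> bool" where
  "GLLOWJFA Sig Q q0 F R \<longleftrightarrow> finite Sig \<and> finite Q \<and> q0 \<in> Q \<and> F \<subseteq> Q \<and> finite R \<and>
     (\<forall>(q, w, p) \<in> R. p \<in> Q \<and> q \<in> Q \<and> w \<noteq> [] \<and> set w \<subseteq> Sig) \<and>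
     (\<forall>p w q q'. (q, w, p) \<in> R \<and> (q', w, p) \<in> R \<longrightarrow> q = q')"

definition SigL :: "('q \<times> 'a list \<times> 'q) set \<Rightarrow> 'q \<Rightarrow> 'a list set" where
  "SigL R p = {w. w \<noteq> [] \<and> (\<exists>q. (q, w, p) \<in> R)}"

definition lstep :: "('q \<times> 'a list \<times> 'q) set \<Rightarrow> ('a list \<times> 'q \<times> 'a list) \<Rightarrow> ('a list \<times> 'q \<times> 'a list) \<Rightarrow> bool" where
  "lstep R c c' \<longleftrightarrow>
     (\<exists>t u x v p q. (q, x, p) \<in> R \<and> c = (v @ x @ u, p, t) \<and> c' = (v, q, u @ t) \<and>
        contains_none u (SigL R p) \<and>
        \<not> (\<exists>u1 u2 x1 x2. u = u1 @ u2 \<and> x = x1 @ x2 \<and> u1 \<noteq> [] \<and> x2 \<noteq> [] \<and> x2 @ u1 = x))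
   \<or> (\<exists>x y p. x \<noteq> [] \<and> contains_none y (SigL R p) \<and> c = (y, p, x) \<and> c' = (y @ x, p, []))"

definition llang :: "'a set \<Rightarrow> 'q \<Rightarrow> 'q set \<Rightarrow> ('q \<times> 'a list \<times> 'q) set \<Rightarrow> 'a list set" where
  "llang Sig q0 F R = {w. w \<in> lists Sig \<and> (\<exists>qf\<in>F. (lstep R)\<^sup>*\<^sup>* (w, q0, []) ([], qf, []))}"

definition GLLOWJ :: "'a list set set" where
  "GLLOWJ = {L. \<exists>Sig (Q :: nat set) q0 F R. GLLOWJFA Sig Q q0 F R \<and> L = llang Sig q0 F R}"

end

theory Submission
  imports Defs
begin
definition flip :: "('q \<times> 'a list \<times> 'q) set \<Rightarrow> ('q \<times> 'a list \<times> 'q) set" where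
  "flip R = (\<lambda>(p, w, q). (q, rev w, p)) ` R"
lemma mem_flip: "(q, w, p) \<in> flip R \<longleftrightarrow> (p, rev w, q) \<in> R"
proof
  assume "(q, w, p) \<in> flip R" then show "(p, rev w, q) \<in> R" unfolding flip_def by auto
next
  assume "(p, rev w, q) \<in> R" then show "(q, w, p) \<in> flip R" unfolding flip_def
    by (rule rev_image_eqI) simp
qed

lemma flip_flip[simp]: "flip (flip R) = R"
proof (rule set_eqI)
  fix c :: "'a \<times> 'b list \<times> 'a" obtain q w p where "c = (q, w, p)" by (cases c) auto
  then show "c \<in> flip (flip R) \<longleftrightarrow> c \<in> R" by (simp add: mem_flip)
qed

definition mc :: "('a list \<times> 'q \<times> 'a list) \<Rightarrow> ('a list \<times> 'q \<times> 'a list)" where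
  "mc c = (case c of (a, p, b) \<Rightarrow> (rev b, p, rev a))"

lemma mc_mc[simp]: "mc (mc c) = c"
  by (cases c) (auto simp: mc_def)

lemma mc_eqD: "mc c = d \<Longrightarrow> c = mc d"
  by (metis mc_mc)

lemma mc_simp[simp]: "mc (a, p, b) = (rev b, p, rev a)"
  by (simp add: mc_def)

lemma SigL_flip: "SigL (flip R) p = rev ` SigR R p"
proof (rule set_eqI)
  fix w
  show "w \<in> SigL (flip R) p \<longleftrightarrow> w \<in> rev ` SigR R p"
  proof
    assume "w \<in> SigL (flip R) p" then show "w \<in> rev ` SigR R p"
      unfolding SigL_def SigR_def by (intro rev_image_eqI[of "rev w"]) (auto simp: mem_flip)
  next
    assume "w \<in> rev ` SigR R p" then obtain v where "v \<in> SigR R p" "w = rev v" by blast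
    then show "w \<in> SigL (flip R) p" unfolding SigL_def SigR_def by (auto simp: mem_flip)
  qed
qed

lemma contains_none_rev: "contains_none (rev u) (rev ` S) \<longleftrightarrow> contains_none u S"
  unfolding contains_none_def by auto
lemma overlap_rev:
  "(\<exists>u1 u2 x1 x2. rev u = u1 @ u2 \<and> rev x = x1 @ x2 \<and> u1 \<noteq> [] \<and> x2 \<noteq> [] \<and> x2 @ u1 = rev x)
   \<longleftrightarrow> (\<exists>u1 u2 x1 x2. u = u1 @ u2 \<and> x = x1 @ x2 \<and> u2 \<noteq> [] \<and> x1 \<noteq> [] \<and> u2 @ x1 = x)"
proof
  assume "\<exists>u1 u2 x1 x2. rev u = u1 @ u2 \<and> rev x = x1 @ x2 \<and> u1 \<noteq> [] \<and> x2 \<noteq> [] \<and> x2 @ u1 = rev x"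
  then obtain u1 u2 x1 x2 where h: "rev u = u1 @ u2" "rev x = x1 @ x2" "u1 \<noteq> []" "x2 \<noteq> []" "x2 @ u1 = rev x"
    by blast
  show "\<exists>u1 u2 x1 x2. u = u1 @ u2 \<and> x = x1 @ x2 \<and> u2 \<noteq> [] \<and> x1 \<noteq> [] \<and> u2 @ x1 = x"
    apply (rule exI[of _ "rev u2"], rule exI[of _ "rev u1"], rule exI[of _ "rev x2"], rule exI[of _ "rev x1"])
    using h by (metis rev_append rev_is_Nil_conv rev_rev_ident)
next
  assume "\<exists>u1 u2 x1 x2. u = u1 @ u2 \<and> x = x1 @ x2 \<and> u2 \<noteq> [] \<and> x1 \<noteq> [] \<and> u2 @ x1 = x"
  then obtain u1 u2 x1 x2 where h: "u = u1 @ u2" "x = x1 @ x2" "u2 \<noteq> []" "x1 \<noteq> []" "u2 @ x1 = x"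
    by blast
  show "\<exists>u1 u2 x1 x2. rev u = u1 @ u2 \<and> rev x = x1 @ x2 \<and> u1 \<noteq> [] \<and> x2 \<noteq> [] \<and> x2 @ u1 = rev x"
    apply (rule exI[of _ "rev u2"], rule exI[of _ "rev u1"], rule exI[of _ "rev x2"], rule exI[of _ "rev x1"])
    using h by (metis rev_append rev_is_Nil_conv)
qed

lemma step_mirror1: "rstep R c c' \<Longrightarrow> lstep (flip R) (mc c) (mc c')"
proof (unfold rstep_def, elim disjE exE conjE)
  fix t u x v p q
  assume h: "(p, x, q) \<in> R" "c = (t, p, u @ x @ v)" "c' = (t @ u, q, v)"
    "contains_none u (SigR R p)"
    "\<not> (\<exists>u1 u2 x1 x2. u = u1 @ u2 \<and> x = x1 @ x2 \<and> u2 \<noteq> [] \<and> x1 \<noteq> [] \<and> u2 @ x1 = x)"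
  have "(q, rev x, p) \<in> flip R" using h(1) by (simp add: mem_flip)
  moreover have "mc c = (rev v @ rev x @ rev u, p, rev t)" "mc c' = (rev v, q, rev u @ rev t)"
    using h by (auto simp: mc_def)
  moreover have "contains_none (rev u) (SigL (flip R) p)"
    using h(4) by (simp add: SigL_flip contains_none_rev)
  moreover have "\<not> (\<exists>u1 u2 x1 x2. rev u = u1 @ u2 \<and> rev x = x1 @ x2 \<and> u1 \<noteq> [] \<and> x2 \<noteq> [] \<and> x2 @ u1 = rev x)"
    unfolding overlap_rev by (rule h(5))
  ultimately show "lstep (flip R) (mc c) (mc c')" unfolding lstep_def
    by - (intro disjI1 exI[of _ "rev t"] exI[of _ "rev u"] exI[of _ "rev x"] exI[of _ "rev v"] exI[of _ p] exI[of _ q] conjI, assumption+)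
next
  fix x y p
  assume h: "x \<noteq> []" "contains_none y (SigR R p)" "c = (x, p, y)" "c' = ([], p, x @ y)"
  have "mc c = (rev y, p, rev x)" "mc c' = (rev y @ rev x, p, [])" using h by (auto simp: mc_def)
  moreover have "contains_none (rev y) (SigL (flip R) p)"
    using h(2) by (simp add: SigL_flip contains_none_rev)
  moreover have "rev x \<noteq> []" using h(1) by simp
  ultimately show "lstep (flip R) (mc c) (mc c')" unfolding lstep_def
    by - (intro disjI2 exI[of _ "rev x"] exI[of _ "rev y"] exI[of _ p] conjI, assumption+)
qed

lemma step_mirror2: "lstep (flip R) (mc c) (mc c') \<Longrightarrow> rstep R c c'"
proof (unfold lstep_def, elim disjE exE conjE)
  fix t u x v p q
  assume h: "(q, x, p) \<in> flip R" "mc c = (v @ x @ u, p, t)" "mc c' = (v, q, u @ t)"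
    "contains_none u (SigL (flip R) p)"
    "\<not> (\<exists>u1 u2 x1 x2. u = u1 @ u2 \<and> x = x1 @ x2 \<and> u1 \<noteq> [] \<and> x2 \<noteq> [] \<and> x2 @ u1 = x)"
  have "(p, rev x, q) \<in> R" using h(1) by (simp add: mem_flip)
  moreover have "c = (rev t, p, rev u @ rev x @ rev v)" "c' = (rev t @ rev u, q, rev v)"
    using mc_eqD[OF h(2)] mc_eqD[OF h(3)] by simp_all
  moreover have "contains_none (rev u) (SigR R p)"
    using h(4) contains_none_rev[of "rev u" "SigR R p"] by (simp add: SigL_flip)
  moreover have "\<not> (\<exists>u1 u2 x1 x2. rev u = u1 @ u2 \<and> rev x = x1 @ x2 \<and> u2 \<noteq> [] \<and> x1 \<noteq> [] \<and> u2 @ x1 = rev x)"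
    using h(5) overlap_rev[of "rev u" "rev x", unfolded rev_rev_ident] by blast
  ultimately show "rstep R c c'" unfolding rstep_def
    by - (intro disjI1 exI[of _ "rev t"] exI[of _ "rev u"] exI[of _ "rev x"] exI[of _ "rev v"] exI[of _ p] exI[of _ q] conjI, assumption+)
next
  fix x y p
  assume h: "x \<noteq> []" "contains_none y (SigL (flip R) p)" "mc c = (y, p, x)" "mc c' = (y @ x, p, [])"
  have "c = (rev x, p, rev y)" "c' = ([], p, rev x @ rev y)" using mc_eqD[OF h(3)] mc_eqD[OF h(4)] by simp_all
  moreover have "contains_none (rev y) (SigR R p)"
    using h(2) contains_none_rev[of "rev y" "SigR R p"] by (simp add: SigL_flip)
  moreover have "rev x \<noteq> []" using h(1) by simp
  ultimately show "rstep R c c'" unfolding rstep_def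
    by - (intro disjI2 exI[of _ "rev x"] exI[of _ "rev y"] exI[of _ p] conjI, assumption+)
qed


lemma step_mirror: "lstep (flip R) a b \<longleftrightarrow> rstep R (mc a) (mc b)"
  using step_mirror1[of R "mc a" "mc b"] step_mirror2[of R "mc a" "mc b"] by auto

lemma star_mirror1: "(lstep (flip R))\<^sup>*\<^sup>* a b \<Longrightarrow> (rstep R)\<^sup>*\<^sup>* (mc a) (mc b)"
  by (induction rule: rtranclp_induct) (auto simp: step_mirror intro: rtranclp.rtrancl_into_rtrancl)

lemma star_mirror2: "(rstep R)\<^sup>*\<^sup>* a b \<Longrightarrow> (lstep (flip R))\<^sup>*\<^sup>* (mc a) (mc b)"
  by (induction rule: rtranclp_induct) (auto simp: step_mirror intro: rtranclp.rtrancl_into_rtrancl)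

lemma lang_mirror: "llang Sig q0 F (flip R) = rev ` rlang Sig q0 F R"
proof -
  have "w \<in> llang Sig q0 F (flip R) \<longleftrightarrow> rev w \<in> rlang Sig q0 F R" for w
  proof -
    have "(lstep (flip R))\<^sup>*\<^sup>* (w, q0, []) ([], qf, []) \<longleftrightarrow> (rstep R)\<^sup>*\<^sup>* ([], q0, rev w) ([], qf, [])" for qf
      using star_mirror1[of R "(w, q0, [])" "([], qf, [])"] star_mirror2[of R "([], q0, rev w)" "([], qf, [])"]
      by (auto simp: mc_def)
    then show ?thesis unfolding llang_def rlang_def by auto
  qed
  then show ?thesis by (auto simp: image_iff) (metis rev_rev_ident)
qed

lemma fa_mirror: "GRLOWJFA Sig Q q0 F R \<Longrightarrow> GLLOWJFA Sig Q q0 F (flip R)"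
  unfolding GRLOWJFA_def GLLOWJFA_def by (auto simp: mem_flip flip_def) fastforce+

lemma fa_mirror2: "GLLOWJFA Sig Q q0 F R \<Longrightarrow> GRLOWJFA Sig Q q0 F (flip R)"
  unfolding GRLOWJFA_def GLLOWJFA_def by (auto simp: mem_flip flip_def) fastforce+

theorem proposition1:
  shows "(\<forall>L1 \<in> (GRLOWJ :: 'a list set set). \<exists>L2 \<in> GLLOWJ. rev ` L1 = L2) \<and>
         (\<forall>L2 \<in> (GLLOWJ :: 'a list set set). \<exists>L1 \<in> GRLOWJ. rev ` L2 = L1)"
proof safe
  fix L1 :: "'a list set" assume "L1 \<in> GRLOWJ"
  then obtain Sig and Q :: "nat set" and q0 F R where h: "GRLOWJFA Sig Q q0 F R" "L1 = rlang Sig q0 F R"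
    unfolding GRLOWJ_def by blast
  have "llang Sig q0 F (flip R) \<in> GLLOWJ" unfolding GLLOWJ_def using fa_mirror[OF h(1)] by blast
  then show "\<exists>L2\<in>GLLOWJ. rev ` L1 = L2" using h(2) lang_mirror by metis
next
  fix L2 :: "'a list set" assume "L2 \<in> GLLOWJ"
  then obtain Sig and Q :: "nat set" and q0 F R where h: "GLLOWJFA Sig Q q0 F R" "L2 = llang Sig q0 F R"
    unfolding GLLOWJ_def by blast
  have "rlang Sig q0 F (flip R) \<in> GRLOWJ" unfolding GRLOWJ_def using fa_mirror2[OF h(1)] by blast
  moreover have "rev ` L2 = rlang Sig q0 F (flip R)"
    using h(2) lang_mirror[of Sig q0 F "flip R"] by (simp add: image_image)
  ultimately show "\<exists>L1\<in>GRLOWJ. rev ` L2 = L1" by blast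
qed

end
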